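(* Let $p_d^+$, $p_d^-$ and $p_g$ be probability densities on $\mathcal{X}\subseteq\mathbb{R}^n$, let $\beta^+,\beta^-$ be real weights and let $a,b^+,b^-,c$ be real class labels with $b^+>b^-$ and $a\leq \frac{b^++b^-}{2}$. For a discriminator $D:\mathcal{X}\to\mathbb{R}$ define the Rumi-LSGAN losses $$\mathcal{L}^{LS}_{D} = \beta^+ \mathbb{E}_{\boldsymbol{x} \sim p_d^+} [ ( D(\boldsymbol{x}) - b^+ )^2 ] + \beta^- \mathbb{E}_{\boldsymbol{x} \sim p_d^-} [ ( D(\boldsymbol{x}) - b^- )^2 ] + \mathbb{E}_{\boldsymbol{x} \sim p_g} [ ( D(\boldsymbol{x}) - a)^2 ],$$ $$\mathcal{L}^{LS}_{G} = \beta^+ \mathbb{E}_{\boldsymbol{x} \sim p_d^+} [ ( D^*(\boldsymbol{x}) - c )^2 ] + \beta^- \mathbb{E}_{\boldsymbol{x} \sim p_d^-} [ ( D^*(\boldsymbol{x}) - c )^2 ] + \mathbb{E}_{\boldsymbol{x} \sim p_g} [ ( D^*(\boldsymbol{x}) - c)^2 ],$$ where $D^*$ is the minimizer of $\mathcal{L}^{LS}_D$ for the given $p_g$, and $\mathcal{L}^{LS}_G$ is minimized over $p_g$ subject to the constraints $\int_{\mathcal{X}}p_g(\boldsymbol{x})\,\mathrm{d}\boldsymbol{x}=1$ and $p_g(\boldsymbol{x})\geq0$ for all $\boldsymbol{x}$. Then the optimal discriminator and the optimal generator density are $$D^*(\boldsymbol{x}) = \frac{b^+ \beta^+ p_d^+(\boldsymbol{x})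 + b^-\beta^-p_d^-(\boldsymbol{x}) + a\,p_g(\boldsymbol{x}) }{\beta^+p_d^+(\boldsymbol{x}) + \beta^-p_d^-(\boldsymbol{x}) + p_g(\boldsymbol{x})},\qquad p_g^*(\boldsymbol{x}) = \beta^+ \eta^+ p_d^+(\boldsymbol{x}) + \beta^- \eta^- p_d^-(\boldsymbol{x}),$$ where $$\eta^+ = \frac{(1+\beta^-)(a - b^+) - \beta^-(a-b^-)}{\beta^+(a - b^+) + \beta^-(a-b^-)},\qquad \eta^- = \frac{(1+\beta^+)(a-b^-) - \beta^+(a - b^+)}{\beta^+(a - b^+) + \beta^-(a-b^-)}.$$
   Context: $p_d^+$ is the density of the "positive" data (target distribution), $p_d^-$ the density of the "negative" data (to be avoided), and $p_g$ the density of the generator's samples. The optimization over $D$ and over $p_g$ (with the constraints handled via Karush-Kuhn-Tucker multipliers) is carried out as a functional optimization, point-wise over $\mathcal{X}$.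
   Formalization: The weights $\beta^+$ and $\beta^-$ are positive, the denominator $\beta^+(a-b^+)+\beta^-(a-b^-)$ is nonzero, and $p_g^*$ is assumed nonnegative on $\mathcal{X}$. Each condition added here is assumed in the paper as well or is needed for the statement above to hold. *)

theory Defs
  imports "HOL-Analysis.Analysis"
begin

definition is_density :: "'a::euclidean_space set \<Rightarrow> ('a \<Rightarrow> real) \<Rightarrow> bool" where
  "is_density X p \<longleftrightarrow> p \<in> borel_measurable lborel \<and> (\<forall>x\<in>X. 0 \<le> p x)
     \<and> (\<integral>\<^sup>+x\<in>X. ennreal (p x) \<partial>lborel) = 1"

definition expect :: "'a::euclidean_space set \<Rightarrow> ('a \<Rightarrow> real) \<Rightarrow> ('a \<Rightarrow> real) \<Rightarrow> ennreal" where
  "expect X p g = (\<integral>\<^sup>+x\<in>X. ennreal (p x * g x) \<partial>lborel)"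

definition LD :: "'a::euclidean_space set \<Rightarrow> real \<Rightarrow> real \<Rightarrow> real \<Rightarrow> real \<Rightarrow> real
     \<Rightarrow> ('a \<Rightarrow> real) \<Rightarrow> ('a \<Rightarrow> real) \<Rightarrow> ('a \<Rightarrow> real) \<Rightarrow> ('a \<Rightarrow> real) \<Rightarrow> ennreal" where
  "LD X betap betam bp bm a pp pm pg D =
     ennreal betap * expect X pp (\<lambda>x. (D x - bp)^2)
   + ennreal betam * expect X pm (\<lambda>x. (D x - bm)^2)
   + expect X pg (\<lambda>x. (D x - a)^2)"

definition Dopt :: "real \<Rightarrow> real \<Rightarrow> real \<Rightarrow> real \<Rightarrow> real
     \<Rightarrow> ('a \<Rightarrow> real) \<Rightarrow> ('a \<Rightarrow> real) \<Rightarrow> ('a \<Rightarrow> real) \<Rightarrow> 'a \<Rightarrow> real" where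
  "Dopt betap betam bp bm a pp pm pg x =
     (bp * betap * pp x + bm * betam * pm x + a * pg x) / (betap * pp x + betam * pm x + pg x)"

definition LG :: "'a::euclidean_space set \<Rightarrow> real \<Rightarrow> real \<Rightarrow> real \<Rightarrow> real \<Rightarrow> real \<Rightarrow> real
     \<Rightarrow> ('a \<Rightarrow> real) \<Rightarrow> ('a \<Rightarrow> real) \<Rightarrow> ('a \<Rightarrow> real) \<Rightarrow> ennreal" where
  "LG X betap betam bp bm a c pp pm pg =
     (let D = Dopt betap betam bp bm a pp pm pg in
       ennreal betap * expect X pp (\<lambda>x. (D x - c)^2)
     + ennreal betam * expect X pm (\<lambda>x. (D x - c)^2)
     + expect X pg (\<lambda>x. (D x - c)^2))"

definition eta_plus :: "real \<Rightarrow> real \<Rightarrow> real \<Rightarrow> real \<Rightarrow> real \<Rightarrow> real" where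
  "eta_plus betap betam bp bm a =
     ((1 + betam) * (a - bp) - betam * (a - bm)) / (betap * (a - bp) + betam * (a - bm))"

definition eta_minus :: "real \<Rightarrow> real \<Rightarrow> real \<Rightarrow> real \<Rightarrow> real \<Rightarrow> real" where
  "eta_minus betap betam bp bm a =
     ((1 + betap) * (a - bm) - betap * (a - bp)) / (betap * (a - bp) + betam * (a - bm))"

end

theory Submission
  imports Defs
begin

lemma dens_M:
  assumes X: "X \<in> sets lborel" and d: "is_density X p"
  shows "p \<in> borel_measurable (restrict_space lborel X)"
    "\<forall>x\<in>space (restrict_space lborel X). 0 \<le> p x"
    "integrable (restrict_space lborel X) p"
    "integral\<^sup>L (restrict_space lborel X) p = 1"
proof -
  have m: "p \<in> borel_measurable lborel" and nn: "\<forall>x\<in>X. 0 \<le> p x"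
   and one: "(\<integral>\<^sup>+x\<in>X. ennreal (p x) \<partial>lborel) = 1"
    using d unfolding is_density_def by auto
  show m': "p \<in> borel_measurable (restrict_space lborel X)"
    using m by (simp add: measurable_restrict_space1)
  show nn': "\<forall>x\<in>space (restrict_space lborel X). 0 \<le> p x"
    using nn by (simp add: space_restrict_space)
  have "(\<integral>\<^sup>+x. ennreal (p x) \<partial>restrict_space lborel X) = ennreal 1"
    using one X by (simp add: nn_integral_restrict_space)
  then have "integrable (restrict_space lborel X) p \<and> integral\<^sup>L (restrict_space lborel X) p = 1"
    using nn_integral_eq_integrable[of p "restrict_space lborel X" 1] m' nn' by auto
  then show "integrable (restrict_space lborel X) p" "integral\<^sup>L (restrict_space lborel X) p = 1"
    by auto
qed

lemma expect_M:
  assumes X: "X \<in> sets lborel"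
  shows "expect X p g = (\<integral>\<^sup>+x. ennreal (p x * g x) \<partial>restrict_space lborel X)"
  using X by (simp add: expect_def nn_integral_restrict_space)

lemma comb3:
  fixes f1 f2 f3 :: "'a \<Rightarrow> real"
  assumes m: "f1 \<in> borel_measurable M" "f2 \<in> borel_measurable M" "f3 \<in> borel_measurable M"
    and nn: "\<forall>x\<in>space M. 0 \<le> f1 x \<and> 0 \<le> f2 x \<and> 0 \<le> f3 x"
    and c: "0 \<le> c1" "0 \<le> c2"
  shows "ennreal c1 * (\<integral>\<^sup>+x. ennreal (f1 x) \<partial>M) + ennreal c2 * (\<integral>\<^sup>+x. ennreal (f2 x) \<partial>M)
          + (\<integral>\<^sup>+x. ennreal (f3 x) \<partial>M)
       = (\<integral>\<^sup>+x. ennreal (c1 * f1 x + c2 * f2 x + f3 x) \<partial>M)"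
proof -
  have "ennreal c1 * (\<integral>\<^sup>+x. ennreal (f1 x) \<partial>M) = (\<integral>\<^sup>+x. ennreal c1 * ennreal (f1 x) \<partial>M)"
    using m by (simp add: nn_integral_cmult)
  moreover have "ennreal c2 * (\<integral>\<^sup>+x. ennreal (f2 x) \<partial>M) = (\<integral>\<^sup>+x. ennreal c2 * ennreal (f2 x) \<partial>M)"
    using m by (simp add: nn_integral_cmult)
  moreover have "(\<integral>\<^sup>+x. ennreal c1 * ennreal (f1 x) \<partial>M) + (\<integral>\<^sup>+x. ennreal c2 * ennreal (f2 x) \<partial>M)
       + (\<integral>\<^sup>+x. ennreal (f3 x) \<partial>M)
     = (\<integral>\<^sup>+x. ennreal c1 * ennreal (f1 x) + ennreal c2 * ennreal (f2 x) + ennreal (f3 x) \<partial>M)"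
    using m by (simp add: nn_integral_add)
  moreover have "(\<integral>\<^sup>+x. ennreal c1 * ennreal (f1 x) + ennreal c2 * ennreal (f2 x) + ennreal (f3 x) \<partial>M)
     = (\<integral>\<^sup>+x. ennreal (c1 * f1 x + c2 * f2 x + f3 x) \<partial>M)"
    using nn c by (intro nn_integral_cong) (simp add: ennreal_mult)
  ultimately show ?thesis by simp
qed

lemma pt1:
  fixes P Q R y bp bm a bet1 bet2 :: real
  assumes "0 \<le> P" "0 \<le> Q" "0 \<le> R" "0 < bet1" "0 < bet2"
  defines "y0 \<equiv> (bp * bet1 * P + bm * bet2 * Q + a * R) / (bet1 * P + bet2 * Q + R)"
  shows "bet1 * (P * (y0 - bp)^2) + bet2 * (Q * (y0 - bm)^2) + R * (y0 - a)^2
       \<le> bet1 * (P * (y - bp)^2) + bet2 * (Q * (y - bm)^2) + R * (y - a)^2"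
proof (cases "bet1 * P + bet2 * Q + R = 0")
  case True
  moreover have "bet1 * P \<ge> 0" "bet2 * Q \<ge> 0" using assms by simp_all
  ultimately have "bet1 * P = 0" "bet2 * Q = 0" "R = 0" using assms by linarith+
  then have "P = 0" "Q = 0" "R = 0" using assms by simp_all
  then show ?thesis by simp
next
  case False
  define W where "W = bet1 * P + bet2 * Q + R"
  have "bet1 * P \<ge> 0" "bet2 * Q \<ge> 0" using assms by simp_all
  then have W: "W > 0" using False assms unfolding W_def by linarith
  define N where "N = bp * bet1 * P + bm * bet2 * Q + a * R"
  define C where "C = bet1 * P * bp^2 + bet2 * Q * bm^2 + R * a^2"
  have Ny: "N = W * y0" unfolding y0_def N_def W_def using W W_def by simp
  have L: "\<And>z. bet1 * (P * (z - bp)^2) + bet2 * (Q * (z - bm)^2) + R * (z - a)^2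
      = W * z^2 - 2 * z * N + C"
    unfolding W_def N_def C_def by (simp add: power2_eq_square algebra_simps)
  have e: "bet1 * (P * (y - bp)^2) + bet2 * (Q * (y - bm)^2) + R * (y - a)^2
     - (bet1 * (P * (y0 - bp)^2) + bet2 * (Q * (y0 - bm)^2) + R * (y0 - a)^2) = W * (y - y0)^2"
    unfolding L Ny by (simp add: power2_eq_square algebra_simps)
  have "W * (y - y0)^2 \<ge> 0" using W by simp
  then show ?thesis using e by linarith
qed


lemma pt3:
  fixes P Q r bp bm a c bet1 bet2 :: real
  assumes "0 \<le> P" "0 \<le> Q" "0 \<le> r" "0 < bet1" "0 < bet2"
    and den: "bet1 * (a - bp) + bet2 * (a - bm) \<noteq> 0"
  defines "s \<equiv> bet1 * eta_plus bet1 bet2 bp bm a * P + bet2 * eta_minus bet1 bet2 bp bm a * Q"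
    and "dl \<equiv> (a + bet1 * bp + bet2 * bm) / (1 + bet1 + bet2)"
    and "Dr \<equiv> (bp * bet1 * P + bm * bet2 * Q + a * r) / (bet1 * P + bet2 * Q + r)"
  shows "bet1 * (P * (Dr - c)^2) + bet2 * (Q * (Dr - c)^2) + r * (Dr - c)^2
     = (dl - c)^2 * (bet1 * P + bet2 * Q + s) + (dl - c) * (2 * (a - c) - (dl - c)) * (r - s)
       + (if bet1 * P + bet2 * Q + r = 0 then 0
          else (a - dl)^2 * (r - s)^2 / (bet1 * P + bet2 * Q + r))"
proof -
  have S: "1 + bet1 + bet2 > 0" using assms by simp
  have ad: "a - dl = (bet1 * (a - bp) + bet2 * (a - bm)) / (1 + bet1 + bet2)"
    unfolding dl_def using S by (simp add: field_simps; simp add: algebra_simps)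
  have dbp: "dl - bp = ((1 + bet2) * (a - bp) - bet2 * (a - bm)) / (1 + bet1 + bet2)"
    unfolding dl_def using S by (simp add: field_simps; simp add: algebra_simps)
  have dbm: "dl - bm = ((1 + bet1) * (a - bm) - bet1 * (a - bp)) / (1 + bet1 + bet2)"
    unfolding dl_def using S by (simp add: field_simps; simp add: algebra_simps)
  have k1: "(a - dl) * eta_plus bet1 bet2 bp bm a = dl - bp"
    unfolding eta_plus_def ad dbp using den by simp
  have k2: "(a - dl) * eta_minus bet1 bet2 bp bm a = dl - bm"
    unfolding eta_minus_def ad dbm using den by simp
  have key: "(a - dl) * s = bet1 * P * (dl - bp) + bet2 * Q * (dl - bm)"
    unfolding s_def by (simp add: algebra_simps k1[symmetric] k2[symmetric])
  show ?thesis
  proof (cases "bet1 * P + bet2 * Q + r = 0")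
    case True
    moreover have "bet1 * P \<ge> 0" "bet2 * Q \<ge> 0" using assms by simp_all
    ultimately have "bet1 * P = 0" "bet2 * Q = 0" "r = 0" using assms by linarith+
    then have "P = 0" "Q = 0" "r = 0" using assms by simp_all
    then show ?thesis by (simp add: s_def)
  next
    case False
    define W where "W = bet1 * P + bet2 * Q + r"
    define N where "N = bp * bet1 * P + bm * bet2 * Q + a * r"
    have "bet1 * P \<ge> 0" "bet2 * Q \<ge> 0" using assms by simp_all
    then have W: "W > 0" using False assms unfolding W_def by linarith
    have NW: "N - c * W = (dl - c) * W + (a - dl) * (r - s)"
      unfolding N_def W_def using key by (simp add: algebra_simps)
    have "bet1 * (P * (Dr - c)^2) + bet2 * (Q * (Dr - c)^2) + r * (Dr - c)^2 = W * (Dr - c)^2"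
      unfolding W_def by (simp add: algebra_simps)
    also have "\<dots> = W * ((N - c * W) / W)^2"
      unfolding Dr_def N_def[symmetric] W_def[symmetric] using W by (simp add: field_simps)
    also have "\<dots> = (N - c * W)^2 / W"
      using W by (simp add: power2_eq_square field_simps)
    also have "\<dots> = ((dl - c) * W + (a - dl) * (r - s))^2 / W" by (simp add: NW)
    also have "\<dots> = (dl - c)^2 * W + 2 * (dl - c) * (a - dl) * (r - s) + (a - dl)^2 * (r - s)^2 / W"
      using W by (simp add: power2_eq_square field_simps)
    also have "\<dots> = (dl - c)^2 * (bet1 * P + bet2 * Q + s) + (dl - c) * (2 * (a - c) - (dl - c)) * (r - s)
       + (a - dl)^2 * (r - s)^2 / W"
      unfolding W_def by (simp add: power2_eq_square algebra_simps)
    finally show ?thesis using False unfolding W_def by simp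
  qed
qed


lemma integral_le_nn:
  fixes g :: "'a \<Rightarrow> real"
  assumes g: "integrable M g"
  shows "ennreal (integral\<^sup>L M g) \<le> (\<integral>\<^sup>+x. ennreal (g x) \<partial>M)"
proof -
  have i: "integrable M (\<lambda>x. max 0 (g x))" using g by auto
  have "integral\<^sup>L M g \<le> integral\<^sup>L M (\<lambda>x. max 0 (g x))"
    using g i by (intro integral_mono) auto
  then have "ennreal (integral\<^sup>L M g) \<le> ennreal (integral\<^sup>L M (\<lambda>x. max 0 (g x)))"
    by (rule ennreal_leI)
  also have "\<dots> = (\<integral>\<^sup>+x. ennreal (max 0 (g x)) \<partial>M)"
    using i by (intro nn_integral_eq_integral[symmetric]) auto
  also have "\<dots> = (\<integral>\<^sup>+x. ennreal (g x) \<partial>M)"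
    by (simp add: ennreal_max_0)
  finally show ?thesis .
qed

lemma three:
  fixes pp pm pg g1 g2 g3 :: "'a::euclidean_space \<Rightarrow> real"
  assumes X: "X \<in> sets lborel"
    and m: "pp \<in> borel_measurable (restrict_space lborel X)"
      "pm \<in> borel_measurable (restrict_space lborel X)"
      "pg \<in> borel_measurable (restrict_space lborel X)"
      "g1 \<in> borel_measurable (restrict_space lborel X)"
      "g2 \<in> borel_measurable (restrict_space lborel X)"
      "g3 \<in> borel_measurable (restrict_space lborel X)"
    and nn: "\<forall>x\<in>X. 0 \<le> pp x" "\<forall>x\<in>X. 0 \<le> pm x" "\<forall>x\<in>X. 0 \<le> pg x"
    and gnn: "\<And>x. 0 \<le> g1 x" "\<And>x. 0 \<le> g2 x" "\<And>x. 0 \<le> g3 x"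
    and c: "0 \<le> c1" "0 \<le> c2"
  shows "ennreal c1 * expect X pp g1 + ennreal c2 * expect X pm g2 + expect X pg g3
     = (\<integral>\<^sup>+x. ennreal (c1 * (pp x * g1 x) + c2 * (pm x * g2 x) + pg x * g3 x) \<partial>restrict_space lborel X)"
  unfolding expect_M[OF X]
  apply (rule comb3)
  using m nn gnn c by (auto simp: space_restrict_space)

theorem lemma2:
  fixes X :: "'a::euclidean_space set"
    and pp pm pg :: "'a \<Rightarrow> real"
    and betap betam bp bm a c :: real
  defines "pgstar \<equiv> (\<lambda>x. betap * eta_plus betap betam bp bm a * pp x
                        + betam * eta_minus betap betam bp bm a * pm x)"
  assumes X: "X \<in> sets lborel"
    and dens: "is_density X pp" "is_density X pm" "is_density X pg"
    and beta: "0 < betap" "0 < betam"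
    and labels: "bp > bm" "a \<le> (bp + bm) / 2"
    and den: "betap * (a - bp) + betam * (a - bm) \<noteq> 0"
    and feasible: "\<forall>x\<in>X. 0 \<le> pgstar x"
  shows "(\<forall>D \<in> borel_measurable lborel.
            LD X betap betam bp bm a pp pm pg (Dopt betap betam bp bm a pp pm pg)
              \<le> LD X betap betam bp bm a pp pm pg D)
       \<and> is_density X pgstar
       \<and> (\<forall>q. is_density X q \<longrightarrow>
            LG X betap betam bp bm a c pp pm pgstar \<le> LG X betap betam bp bm a c pp pm q)"
proof -
  define M where "M = restrict_space lborel X"
  have spM: "space M = X" unfolding M_def by (simp add: space_restrict_space)
  note dp = dens_M[OF X dens(1), folded M_def, unfolded spM]
  note dm = dens_M[OF X dens(2), folded M_def, unfolded spM]
  note dg = dens_M[OF X dens(3), folded M_def, unfolded spM]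
  have lift: "f \<in> borel_measurable M" if "f \<in> borel_measurable lborel" for f :: "'a \<Rightarrow> real"
    using that unfolding M_def by (simp add: measurable_restrict_space1)
  have bl: "pp \<in> borel_measurable lborel" "pm \<in> borel_measurable lborel" "pg \<in> borel_measurable lborel"
    using dens unfolding is_density_def by auto
  have LDeq: "LD X betap betam bp bm a pp pm pg D = (\<integral>\<^sup>+x. ennreal (betap * (pp x * (D x - bp)^2)
      + betam * (pm x * (D x - bm)^2) + pg x * (D x - a)^2) \<partial>M)"
    if "D \<in> borel_measurable M" for D
    unfolding LD_def M_def
    apply (rule three[OF X])
    using that dp dm dg beta unfolding M_def by (auto simp: dens[unfolded is_density_def])
  have Doptm: "Dopt betap betam bp bm a pp pm pg \<in> borel_measurable M"
    using dp(1) dm(1) dg(1) unfolding Dopt_def[abs_def] by measurable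
  have part1: "\<forall>D \<in> borel_measurable lborel.
            LD X betap betam bp bm a pp pm pg (Dopt betap betam bp bm a pp pm pg)
              \<le> LD X betap betam bp bm a pp pm pg D"
  proof
    fix D :: "'a \<Rightarrow> real" assume "D \<in> borel_measurable lborel"
    then have Dm: "D \<in> borel_measurable M" by (rule lift)
    show "LD X betap betam bp bm a pp pm pg (Dopt betap betam bp bm a pp pm pg)
              \<le> LD X betap betam bp bm a pp pm pg D"
      unfolding LDeq[OF Dm] LDeq[OF Doptm]
      apply (rule nn_integral_mono)
      apply (rule ennreal_leI)
      unfolding spM Dopt_def
      apply (rule pt1)
      using dp dm dg beta by auto
  qed
  have pgbl: "pgstar \<in> borel_measurable lborel"
    unfolding pgstar_def using bl by measurable
  have pgM: "pgstar \<in> borel_measurable M" using pgbl by (rule lift)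
  have pgint: "integrable M pgstar"
    unfolding pgstar_def using dp(3) dm(3) by auto
  have etasum: "betap * eta_plus betap betam bp bm a + betam * eta_minus betap betam bp bm a = 1"
    unfolding eta_plus_def eta_minus_def using den
    by (simp add: add_divide_distrib[symmetric]) (simp add: divide_eq_1_iff algebra_simps)
  have pgI: "integral\<^sup>L M pgstar = 1"
    unfolding pgstar_def using dp(3,4) dm(3,4) etasum by simp
  have pgnn: "integral\<^sup>N M (\<lambda>x. ennreal (pgstar x)) = ennreal 1"
    using nn_integral_eq_integral[OF pgint] feasible pgI spM by (auto intro!: AE_I2)
  have part2: "is_density X pgstar"
    unfolding is_density_def
    using pgbl feasible pgnn X unfolding M_def by (simp add: nn_integral_restrict_space)
  define dl where "dl = (a + betap * bp + betam * bm) / (1 + betap + betam)"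
  define e where "e = dl - c"
  define lam where "lam = e * (2 * (a - c) - e)"
  have LGeq: "LG X betap betam bp bm a c pp pm r = (\<integral>\<^sup>+x. ennreal (betap * (pp x * (Dopt betap betam bp bm a pp pm r x - c)^2)
      + betam * (pm x * (Dopt betap betam bp bm a pp pm r x - c)^2) + r x * (Dopt betap betam bp bm a pp pm r x - c)^2) \<partial>M)"
    if "r \<in> borel_measurable M" "\<forall>x\<in>X. 0 \<le> r x" for r
  proof -
    have "Dopt betap betam bp bm a pp pm r \<in> borel_measurable M"
      using dp(1) dm(1) that(1) unfolding Dopt_def[abs_def] by measurable
    then show ?thesis
      unfolding LG_def Let_def M_def
      apply (intro three[OF X])
      using that dp dm beta unfolding M_def by (auto simp: dens[unfolded is_density_def])
  qed
  have ptq: "betap * (pp x * (Dopt betap betam bp bm a pp pm r x - c)^2)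
      + betam * (pm x * (Dopt betap betam bp bm a pp pm r x - c)^2) + r x * (Dopt betap betam bp bm a pp pm r x - c)^2
      = e^2 * (betap * pp x + betam * pm x + pgstar x) + lam * (r x - pgstar x)
       + (if betap * pp x + betam * pm x + r x = 0 then 0
          else (a - dl)^2 * (r x - pgstar x)^2 / (betap * pp x + betam * pm x + r x))"
    if "x \<in> X" "0 \<le> r x" for r x
    unfolding Dopt_def pgstar_def e_def lam_def dl_def
    by (rule pt3) (use that dp dm beta den in auto)
  have Gint: "integrable M (\<lambda>x. e^2 * (betap * pp x + betam * pm x + pgstar x) + lam * (r x - pgstar x))"
    if "integrable M r" for r
    using that dp(3) dm(3) pgint by auto
  have GI: "integral\<^sup>L M (\<lambda>x. e^2 * (betap * pp x + betam * pm x + pgstar x) + lam * (r x - pgstar x))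
     = e^2 * (betap + betam + 1)"
    if "integrable M r" "integral\<^sup>L M r = 1" for r
    using that dp(3,4) dm(3,4) pgint pgI by simp
  have LGstar: "LG X betap betam bp bm a c pp pm pgstar = ennreal (e^2 * (betap + betam + 1))"
  proof -
    have "LG X betap betam bp bm a c pp pm pgstar
       = (\<integral>\<^sup>+x. ennreal (e^2 * (betap * pp x + betam * pm x + pgstar x) + lam * (pgstar x - pgstar x)) \<partial>M)"
      unfolding LGeq[OF pgM feasible]
      by (intro nn_integral_cong) (simp add: ptq spM feasible)
    also have "\<dots> = ennreal (e^2 * (betap + betam + 1))"
      using nn_integral_eq_integral[OF Gint[OF pgint]] GI[OF pgint pgI] feasible dp(2) dm(2) beta spM
      by (auto intro!: AE_I2)
    finally show ?thesis .
  qed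
  have part3: "\<forall>q. is_density X q \<longrightarrow>
            LG X betap betam bp bm a c pp pm pgstar \<le> LG X betap betam bp bm a c pp pm q"
  proof (intro allI impI)
    fix q assume q: "is_density X q"
    note dq = dens_M[OF X q, folded M_def, unfolded spM]
    have "ennreal (e^2 * (betap + betam + 1))
        = ennreal (integral\<^sup>L M (\<lambda>x. e^2 * (betap * pp x + betam * pm x + pgstar x) + lam * (q x - pgstar x)))"
      using GI[OF dq(3,4)] by simp
    also have "\<dots> \<le> (\<integral>\<^sup>+x. ennreal (e^2 * (betap * pp x + betam * pm x + pgstar x) + lam * (q x - pgstar x)) \<partial>M)"
      by (rule integral_le_nn[OF Gint[OF dq(3)]])
    also have "\<dots> \<le> LG X betap betam bp bm a c pp pm q"
      unfolding LGeq[OF dq(1,2)]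
    proof (rule nn_integral_mono, rule ennreal_leI)
      fix x assume "x \<in> space M"
      then have x: "x \<in> X" using spM by simp
      have nnx: "0 \<le> q x" using dq(2) x by auto
      have "0 \<le> betap * pp x" "0 \<le> betam * pm x" using dp(2) dm(2) x beta by simp_all
      then have W0: "0 \<le> betap * pp x + betam * pm x + q x" using nnx by linarith
      have "0 \<le> (if betap * pp x + betam * pm x + q x = 0 then 0
          else (a - dl)^2 * (q x - pgstar x)^2 / (betap * pp x + betam * pm x + q x))"
        using W0 by simp
      then show "e^2 * (betap * pp x + betam * pm x + pgstar x) + lam * (q x - pgstar x)
        \<le> betap * (pp x * (Dopt betap betam bp bm a pp pm q x - c)^2)
      + betam * (pm x * (Dopt betap betam bp bm a pp pm q x - c)^2) + q x * (Dopt betap betam bp bm a pp pm q x - c)^2"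
        unfolding ptq[where r=q and x=x, OF x nnx] by linarith
    qed
    finally have "ennreal (e^2 * (betap + betam + 1)) \<le> LG X betap betam bp bm a c pp pm q" .
    then show "LG X betap betam bp bm a c pp pm pgstar \<le> LG X betap betam bp bm a c pp pm q"
      unfolding LGstar .
  qed
  show ?thesis using part1 part2 part3 by blast
qed

end
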